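(* Let $m\ge 2$ be an integer and let $C=uRM(m)\subseteq \mathbb{F}_2^{2^m}$ be the classical binary linear code defined in the context (the code cut out by the weight-4 bulk checks and the boundary checks $S(w,t)$ on a $2^b\times 2^a$ grid). Then $C$ is equivalent, up to a permutation of coordinates, to the first-order Reed–Muller code $RM(1,m)$; in particular $C$ has parameters $[n,k,d]=[2^m,\,m+1,\,2^{m-1}]$.
   Context: Let $a=\lceil m/2\rceil$ and $b=\lfloor m/2\rfloor$, so $a+b=m$. Place $2^m$ bits on a rectangular grid with $2^b$ rows and $2^a$ columns; bits are indexed by grid positions $(i,j)$, $1\le i\le 2^b$, $1\le j\le 2^a$, with row $i=1$ the top row and column $j=1$ the leftmost column. A check is a subset of grid positions; a vector $x\in\mathbb{F}_2^{2^m}$ satisfies the check if the sum of $x$ over that subset is $0$ mod 2. Bulk checks: for every $1\le i<2^b$, $1\le j<2^a$, the 4-element set $\{(i,j),(i+1,j),(i,j+1),(i+1,j+1)\}$. Boundary checks: for a line of $L=2^n$ positions labelled $1,\dots,L$, and for each $s\in\{1,\dots,n-1\}$, $w=2^s$, and each integer $t$ with $-L/(2w)+1\le t\le L/(2w)-1$, define the 4-element set $S(w,t)=\{L/2-w/2+wt,\ L/2-w/2+wt+1,\ L/2+w/2+wt,\ L/2+w/2+wt+1\}$. The horizontal boundary checks are the sets $S(w,t)$ (with $n=a$) placed on the top row (position $j$ of the line being $(1,j)$); the vertical boundary checks are the sets $S(w,t)$ (with $n=b$) placed on the leftmost column (position $i$ of the line being $(i,1)$). $uRM(m)$ is the set of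 all $x\in\mathbb{F}_2^{2^m}$ satisfying all bulk and boundary checks. $RM(1,m)$ is the binary code of length $2^m$ consisting of the evaluation vectors $(c_0+c\cdot v)_{v\in\mathbb{F}_2^m}$ over all $c_0\in\mathbb{F}_2$, $c\in\mathbb{F}_2^m$. *)

theory Defs
  imports Main
begin

definition ca :: "nat \<Rightarrow> nat" where "ca m = (m + 1) div 2"
definition cb :: "nat \<Rightarrow> nat" where "cb m = m div 2"

definition grid :: "nat \<Rightarrow> (int \<times> int) set" where
  "grid m = {1..2 ^ cb m} \<times> {1..2 ^ ca m}"

definition bulk_checks :: "nat \<Rightarrow> (int \<times> int) set set" where
  "bulk_checks m = {{(i,j), (i+1,j), (i,j+1), (i+1,j+1)} | i j.
      1 \<le> i \<and> i < 2 ^ cb m \<and> 1 \<le> j \<and> j < 2 ^ ca m}"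

definition Sset :: "int \<Rightarrow> int \<Rightarrow> int \<Rightarrow> int set" where
  "Sset L w t = {L div 2 - w div 2 + w * t, L div 2 - w div 2 + w * t + 1,
                 L div 2 + w div 2 + w * t, L div 2 + w div 2 + w * t + 1}"

definition bd_sets :: "nat \<Rightarrow> int set set" where
  "bd_sets n = {Sset (2 ^ n) (2 ^ s) t | s t.
      1 \<le> s \<and> s \<le> n - 1 \<and>
      - ((2 ^ n) div (2 * 2 ^ s)) + 1 \<le> t \<and> t \<le> (2 ^ n) div (2 * 2 ^ s) - 1}"

definition hor_checks :: "nat \<Rightarrow> (int \<times> int) set set" where
  "hor_checks m = (\<lambda>T. (\<lambda>j. (1, j)) ` T) ` bd_sets (ca m)"

definition ver_checks :: "nat \<Rightarrow> (int \<times> int) set set" where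
  "ver_checks m = (\<lambda>T. (\<lambda>i. (i, 1)) ` T) ` bd_sets (cb m)"

definition all_checks :: "nat \<Rightarrow> (int \<times> int) set set" where
  "all_checks m = bulk_checks m \<union> hor_checks m \<union> ver_checks m"

text \<open>A word is a 0/1 function (bool) vanishing outside the coordinate set;
  it satisfies a check if its sum over the check is 0 mod 2.\<close>
definition satisfies :: "('a \<Rightarrow> bool) \<Rightarrow> 'a set \<Rightarrow> bool" where
  "satisfies x S \<longleftrightarrow> even (card {p \<in> S. x p})"

definition uRM :: "nat \<Rightarrow> (int \<times> int \<Rightarrow> bool) set" where
  "uRM m = {x. (\<forall>p. x p \<longrightarrow> p \<in> grid m) \<and> (\<forall>S \<in> all_checks m. satisfies x S)}"

text \<open>F_2^m as bool lists of length m; RM(1,m) as evaluation vectors indexed by them.\<close>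
definition vecs :: "nat \<Rightarrow> bool list set" where
  "vecs m = {v. length v = m}"

definition dotF2 :: "bool list \<Rightarrow> bool list \<Rightarrow> bool" where
  "dotF2 c v \<longleftrightarrow> odd (card {i. i < length c \<and> c ! i \<and> v ! i})"

definition RM1 :: "nat \<Rightarrow> (bool list \<Rightarrow> bool) set" where
  "RM1 m = {y. \<exists>c0 c. length c = m \<and>
      y = (\<lambda>v. if v \<in> vecs m then (c0 \<noteq> dotF2 c v) else False)}"

definition hdist :: "('a \<Rightarrow> bool) \<Rightarrow> ('a \<Rightarrow> bool) \<Rightarrow> nat" where
  "hdist x y = card {p. x p \<noteq> y p}"

definition min_dist :: "('a \<Rightarrow> bool) set \<Rightarrow> nat" where
  "min_dist C = Min {hdist x y | x y. x \<in> C \<and> y \<in> C \<and> x \<noteq> y}"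

end

theory Submission
  imports Defs
begin


lemma sat4:
  assumes "distinct [a,b,c,d]"
  shows "satisfies x {a,b,c,d} \<longleftrightarrow> ((x a \<noteq> x b) = (x c \<noteq> x d))"
proof -
  have e: "{p \<in> {a,b,c,d}. x p} = (if x a then {a} else {}) \<union> (if x b then {b} else {}) \<union> (if x c then {c} else {}) \<union> (if x d then {d} else {})"
    by auto
  show ?thesis unfolding satisfies_def e using assms
    by (cases "x a"; cases "x b"; cases "x c"; cases "x d") (auto simp: card_insert_if)
qed

lemma sat_image:
  assumes "inj f"
  shows "satisfies x (f ` T) = satisfies (\<lambda>j. x (f j)) T"
proof -
  have "{p \<in> f ` T. x p} = f ` {j \<in> T. x (f j)}" by auto
  moreover have "card (f ` {j \<in> T. x (f j)}) = card {j \<in> T. x (f j)}"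
    using assms by (simp add: card_image inj_on_def inj_def)
  ultimately show ?thesis unfolding satisfies_def by simp
qed

lemma sat_cong:
  assumes "\<And>p. p \<in> T \<Longrightarrow> x p = y p"
  shows "satisfies x T = satisfies y T"
proof -
  have "{p \<in> T. x p} = {p \<in> T. y p}" using assms by auto
  thus ?thesis unfolding satisfies_def by simp
qed

primrec par :: "nat \<Rightarrow> (nat \<Rightarrow> bool) \<Rightarrow> bool" where
  "par 0 P = False"
| "par (Suc n) P = (par n P \<noteq> P n)"

lemma par_card: "odd (card {i. i < n \<and> P i}) = par n P"
proof (induction n)
  case 0 then show ?case by simp
next
  case (Suc n)
  have "{i. i < Suc n \<and> P i} = (if P n then insert n {i. i < n \<and> P i} else {i. i < n \<and> P i})"
    by (auto simp: less_Suc_eq)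
  then show ?case using Suc by (auto simp: card_insert_if)
qed

lemma par_xor: "(par n P \<noteq> par n Q) = par n (\<lambda>i. P i \<noteq> Q i)"
  by (induction n) auto

lemma par_cong: "(\<And>i. i < n \<Longrightarrow> P i = Q i) \<Longrightarrow> par n P = par n Q"
  by (induction n) auto

lemma par_false: "par n (\<lambda>_. False) = False"
  by (induction n) auto

lemma par_single: "par n (\<lambda>j. Q j \<and> j = i) = (i < n \<and> Q i)"
  by (induction n) (auto simp: less_Suc_eq)

lemma par_add: "par (a + b) P = (par a P \<noteq> par b (\<lambda>i. P (a + i)))"
  by (induction b) auto

lemma dotF2_par: "dotF2 c v = par (length c) (\<lambda>i. c ! i \<and> v ! i)"
  unfolding dotF2_def par_card[symmetric] by simp

primrec bits :: "nat \<Rightarrow> nat \<Rightarrow> bool list" where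
  "bits 0 u = []"
| "bits (Suc n) u = odd u # bits n (u div 2)"

primrec val :: "bool list \<Rightarrow> nat" where
  "val [] = 0"
| "val (x # xs) = of_bool x + 2 * val xs"

lemma length_bits[simp]: "length (bits n u) = n"
  by (induction n arbitrary: u) auto

lemma nth_bits: "i < n \<Longrightarrow> bits n u ! i = odd (u div 2 ^ i)"
proof (induction n arbitrary: u i)
  case 0 then show ?case by simp
next
  case (Suc n)
  note IH = Suc.IH and pr = Suc.prems
  show ?case
  proof (cases i)
    case 0 then show ?thesis by simp
  next
    case (Suc i')
    then have "bits (Suc n) u ! i = odd (u div 2 div 2 ^ i')" using IH pr by simp
    also have "u div 2 div 2 ^ i' = u div 2 ^ i" using \<open>i = Suc i'\<close>
      by (simp add: div_mult2_eq)
    finally show ?thesis .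
  qed
qed

lemma val_less: "val xs < 2 ^ length xs"
  by (induction xs) auto

lemma bits_val: "bits (length xs) (val xs) = xs"
  by (induction xs) auto

lemma val_bits: "u < 2 ^ n \<Longrightarrow> val (bits n u) = u"
proof (induction n arbitrary: u)
  case 0 then show ?case by simp
next
  case (Suc n)
  have "u div 2 < 2 ^ n" using Suc(2) by auto
  then have "val (bits n (u div 2)) = u div 2" using Suc by blast
  then show ?case by simp
qed



lemma bd_sets_D:
  assumes "T \<in> bd_sets n"
  obtains v k where "v + 2 \<le> n" "2^v*(2*k+3) < (2::nat)^n"
   "T = {int (2^v*(2*k+1)), int (2^v*(2*k+1)) + 1, int (2^v*(2*k+3)), int (2^v*(2*k+3)) + 1}"
proof -
  from assms obtain s t where s: "1 \<le> s" "s \<le> n-1"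
    and t: "- ((2^n) div (2*2^s)) + 1 \<le> t" "t \<le> (2^n) div (2*2^s) - (1::int)"
    and T: "T = Sset (2^n) (2^s) t"
    unfolding bd_sets_def by blast
  obtain v where v: "s = Suc v" using s by (cases s) auto
  define r where "r = n - (v+2)"
  have r: "n = v + 2 + r" using s v unfolding r_def by auto
  define P where "P = (2::int)^v"
  define M where "M = (2::int)^r"
  have P0: "P > 0" unfolding P_def by simp
  have e1: "(2::int)^n = 4*P*M" unfolding P_def M_def r by (simp add: power_add)
  have e2: "(2::int)^s = 2*P" unfolding P_def v by simp
  have e3: "(2::int)^n div 2 = 2*P*M" using e1 by simp
  have e4: "(2::int)^s div 2 = P" using e2 by simp
  have e5: "(2::int)^n div (2*2^s) = M" using e1 e2 P0 by simp
  define k where "k = nat (t - 1 + M)"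
  have k: "int k = t - 1 + M" unfolding k_def using t e5 by simp
  have i1: "int (2^v*(2*k+1)) = P*(2*int k+1)" unfolding P_def by (simp add: algebra_simps)
  have i3: "int (2^v*(2*k+3)) = P*(2*int k+3)" unfolding P_def by (simp add: algebra_simps)
  have "T = {int (2^v*(2*k+1)), int (2^v*(2*k+1)) + 1, int (2^v*(2*k+3)), int (2^v*(2*k+3)) + 1}"
    unfolding T Sset_def e3 e4 e2 i1 i3 k by (simp add: algebra_simps)
  moreover have "v + 2 \<le> n" using r by simp
  moreover have "2^v*(2*k+3) < (2::nat)^n"
  proof -
    have "2*int k + 3 < 4*M" using k t e5 by simp
    then have "P*(2*int k+3) < P*(4*M)" using P0 by (rule mult_strict_left_mono)
    then have "int (2^v*(2*k+3)) < int (2^n)" using i3 e1 by (simp add: algebra_simps)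
    then show ?thesis by linarith
  qed
  ultimately show ?thesis using that by blast
qed

lemma bd_sets_I:
  assumes "v + 2 \<le> n" "2^v*(2*k+3) < (2::nat)^n"
  shows "{int (2^v*(2*k+1)), int (2^v*(2*k+1)) + 1, int (2^v*(2*k+3)), int (2^v*(2*k+3)) + 1} \<in> bd_sets n"
proof -
  obtain r where r: "n = v + 2 + r" using assms(1) by (metis le_add_diff_inverse)
  define P where "P = (2::int)^v"
  define M where "M = (2::int)^r"
  have P0: "P > 0" unfolding P_def by simp
  have e1: "(2::int)^n = 4*P*M" unfolding P_def M_def r by (simp add: power_add)
  have e2: "(2::int)^(Suc v) = 2*P" unfolding P_def by simp
  have e3: "(2::int)^n div 2 = 2*P*M" using e1 by simp
  have e4: "(2::int)^(Suc v) div 2 = P" using e2 by simp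
  have e5: "(2::int)^n div (2*2^(Suc v)) = M" using e1 e2 P0 by simp
  define t where "t = int k + 1 - M"
  have i1: "int (2^v*(2*k+1)) = P*(2*int k+1)" unfolding P_def by (simp add: algebra_simps)
  have i3: "int (2^v*(2*k+3)) = P*(2*int k+3)" unfolding P_def by (simp add: algebra_simps)
  have kb: "2*int k + 3 < 4*M"
  proof -
    have "int (2^v*(2*k+3)) < int (2^n)" using assms(2) by linarith
    then have "P*(2*int k+3) < P*(4*M)" using i3 e1 by (simp add: algebra_simps)
    then show ?thesis using P0 by (simp add: mult_less_cancel_left)
  qed
  have "Sset (2^n) (2^(Suc v)) t = {int (2^v*(2*k+1)), int (2^v*(2*k+1)) + 1, int (2^v*(2*k+3)), int (2^v*(2*k+3)) + 1}"
    unfolding Sset_def e3 e4 e2 i1 i3 t_def by (simp add: algebra_simps)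
  moreover have "1 \<le> Suc v" "Suc v \<le> n - 1" using r by auto
  moreover have "- ((2^n) div (2*2^(Suc v))) + 1 \<le> t" "t \<le> (2^n) div (2*2^(Suc v)) - (1::int)"
    unfolding e5 t_def using kb by auto
  ultimately show ?thesis unfolding bd_sets_def by blast
qed



definition lin :: "nat \<Rightarrow> (nat \<Rightarrow> bool) \<Rightarrow> nat \<Rightarrow> bool" where
  "lin n d u = par n (\<lambda>k. d k \<and> odd (u div 2 ^ k))"

lemma bitflip:
  "(odd ((2^v*(2*k+1) - 1) div 2^i) \<noteq> odd ((2^v*(2*k+1)) div (2::nat)^i)) \<longleftrightarrow> i \<le> v"
proof (cases "i \<le> v")
  case True
  define N where "N = 2^(v-i)*(2*k+1)"
  have N1: "N \<ge> 1" unfolding N_def by (simp add: Suc_le_eq)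
  have pv: "(2::nat)^v = 2^i*2^(v-i)" using True by (metis le_add_diff_inverse power_add)
  have q: "2^v*(2*k+1) = (2::nat)^i * N" unfolding N_def pv by (simp only: mult.assoc)
  have a: "(2^i * N) div (2::nat)^i = N" by simp
  obtain N' where N': "N = Suc N'" using N1 by (cases N) auto
  have p1: "(2::nat)^i \<ge> 1" by simp
  have eq: "2^i * N - 1 = (2^i - 1) + (N - 1) * (2::nat)^i"
    unfolding N' mult_Suc_right diff_Suc_1 using p1 by (simp add: mult.commute)
  have pn: "(2::nat)^i \<noteq> 0" by simp
  have lt: "(2::nat)^i - 1 < 2^i" by simp
  have b: "(2^i * N - 1) div (2::nat)^i = N - 1"
    unfolding eq div_mult_self1[OF pn] div_less[OF lt] by simp
  show ?thesis unfolding q a b using N1 True by (cases N) auto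
next
  case False
  then obtain r where r: "i = v + Suc r" by (metis add_Suc_right less_imp_Suc_add not_le)
  have a: "(2^v*(2*k+1) - 1) div 2^v = 2*k" 
  proof -
    have p1: "(2::nat)^v \<ge> 1" by simp
    have eq: "2^v*(2*k+1) - 1 = (2^v - 1) + (2*k) * (2::nat)^v"
      using p1 by (simp add: algebra_simps)
    have pn: "(2::nat)^v \<noteq> 0" by simp
    have lt: "(2::nat)^v - 1 < 2^v" by simp
    show ?thesis unfolding eq div_mult_self1[OF pn] div_less[OF lt] by simp
  qed
  have b: "(2^v*(2*k+1)) div (2::nat)^v = 2*k+1" by simp
  have "(2^v*(2*k+1) - 1) div 2^i = (2*k) div (2 * 2^r)" 
    unfolding r power_add div_mult2_eq a by (simp only: power_Suc div_mult2_eq)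
  moreover have "(2^v*(2*k+1)) div 2^i = (2*k+1) div (2 * 2^r)" 
    unfolding r power_add div_mult2_eq b by (simp only: power_Suc div_mult2_eq)
  moreover have "(2*k) div (2 * 2^r) = (2*k+1) div (2 * (2::nat)^r)"
  proof -
    have x1: "(2*k+1) div 2 = k" "(2*k) div 2 = (k::nat)" by simp_all
    show ?thesis by (simp only: div_mult2_eq x1)
  qed
  ultimately show ?thesis using False by simp
qed



lemma odd_decomp: "0 < (u::nat) \<Longrightarrow> \<exists>v k. u = 2^v*(2*k+1)"
proof (induction u rule: less_induct)
  case (less u)
  show ?case
  proof (cases "even u")
    case True
    then obtain w where w: "u = 2*w" by blast
    then have "0 < w" "w < u" using less.prems by auto
    then obtain v k where "w = 2^v*(2*k+1)" using less.IH by blast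
    then have "u = 2^(Suc v)*(2*k+1)" using w by simp
    then show ?thesis by blast
  next
    case False
    then have "u = 2^0*(2*(u div 2)+1)" by simp
    then show ?thesis by blast
  qed
qed

lemma pow_div_odd: "odd ((2::nat)^i div 2^k) \<longleftrightarrow> k = i"
proof (cases "k \<le> i")
  case True
  then have "(2::nat)^i div 2^k = 2^(i-k)" by (simp add: power_diff)
  then show ?thesis using True by simp
next
  case False
  then have "(2::nat)^i < 2^k" by simp
  then have "(2::nat)^i div 2^k = 0" by simp
  then show ?thesis using False by simp
qed

definition line_ok :: "nat \<Rightarrow> (int \<Rightarrow> bool) \<Rightarrow> bool" where
  "line_ok n f \<longleftrightarrow> (\<forall>T\<in>bd_sets n. satisfies f T)"

lemma distinct4_gen: "(P::int) \<ge> 1 \<Longrightarrow> distinct [A, A+1, A + 2*P, A + 2*P + 1]"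
  by auto

lemma nat_m1: "(q::nat) \<ge> 1 \<Longrightarrow> nat (int q - 1) = q - 1" by auto
lemma int_m1: "(q::nat) \<ge> 1 \<Longrightarrow> int (q - 1) + 1 = int q" by auto

lemma distinct4:
  "distinct [int (2^v*(2*k+1)), int (2^v*(2*k+1)) + 1, int (2^v*(2*k+3)), int (2^v*(2*k+3)) + 1]"
proof -
  have h: "int (2^v*(2*k+3)) = int (2^v*(2*k+1)) + 2*2^v" by (simp add: algebra_simps)
  have p: "(2::int)^v \<ge> 1" by simp
  show ?thesis unfolding h by (rule distinct4_gen[OF p])
qed

lemma bd_check:
  assumes "line_ok n f" "v + 2 \<le> n" "2^v*(2*k+3) < (2::nat)^n"
  shows "(f (int (2^v*(2*k+1))) \<noteq> f (int (2^v*(2*k+1)) + 1)) =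
         (f (int (2^v*(2*k+3))) \<noteq> f (int (2^v*(2*k+3)) + 1))"
proof -
  have "satisfies f {int (2^v*(2*k+1)), int (2^v*(2*k+1)) + 1, int (2^v*(2*k+3)), int (2^v*(2*k+3)) + 1}"
    using assms(1) bd_sets_I[OF assms(2,3)] unfolding line_ok_def by blast
  then show ?thesis unfolding sat4[OF distinct4] .
qed

lemma SP:
  assumes "line_ok n f" "2^v*(2*k+1) < (2::nat)^n"
  shows "(f (int (2^v*(2*k+1))) \<noteq> f (int (2^v*(2*k+1)) + 1)) =
         (f (int (2^v)) \<noteq> f (int (2^v) + 1))"
  using assms(2)
proof (induction k)
  case 0 then show ?case by simp
next
  case (Suc k)
  have e: "2*Suc k + 1 = 2*k+3" by simp
  have lt: "2^v*(2*k+3) < (2::nat)^n" using Suc.prems e by metis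
  have "(2::nat)^(v+1) < 2^n"
  proof -
    have "(2::nat)^(v+1) \<le> 2^v*(2*k+3)" by simp
    then show ?thesis using lt by linarith
  qed
  then have "v + 1 < n" using power_less_imp_less_exp[of 2 "v+1" n] by simp
  then have v2: "v + 2 \<le> n" by simp
  have "2^v*(2*k+1) \<le> (2::nat)^v*(2*k+3)" by (rule mult_le_mono2) simp
  then have "2^v*(2*k+1) < (2::nat)^n" using lt by linarith
  then show ?case using Suc.IH bd_check[OF assms(1) v2 lt] unfolding e by simp
qed

definition SPg :: "nat \<Rightarrow> (nat \<Rightarrow> bool) \<Rightarrow> bool" where
  "SPg n g \<longleftrightarrow> (\<forall>v k. 2^v*(2*k+1) < (2::nat)^n \<longrightarrow>
     (g (2^v*(2*k+1) - 1) \<noteq> g (2^v*(2*k+1))) = (g (2^v - 1) \<noteq> g (2^v)))"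

lemma uniq:
  assumes "SPg n g" "SPg n h" "g 0 = h 0" "\<And>i. i < n \<Longrightarrow> g (2^i) = h (2^i)"
  shows "u < 2^n \<Longrightarrow> g u = h u"
proof (induction u rule: less_induct)
  case (less u)
  show ?case
  proof (cases "u = 0")
    case True then show ?thesis using assms(3) by simp
  next
    case False
    then obtain v k where u: "u = 2^v*(2*k+1)" using odd_decomp by blast
    have "(2::nat)^v \<le> u" unfolding u by simp
    then have "(2::nat)^v < 2^n" using less.prems by linarith
    then have vn: "v < n" by simp
    show ?thesis
    proof (cases "k = 0")
      case True then show ?thesis using assms(4)[OF vn] u by simp
    next
      case False
      have lt1: "(2::nat)^v < u" unfolding u using False by simp
      have p1: "(2::nat)^v \<ge> 1" by simp
      have "u - 1 < u" "2^v - 1 < u" using lt1 p1 by auto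
      then have i1: "g (u-1) = h (u-1)" "g (2^v - 1) = h (2^v - 1)" "g (2^v) = h (2^v)"
        using less.IH less.prems lt1 by auto
      have "(g (u - 1) \<noteq> g u) = (g (2^v - 1) \<noteq> g (2^v))"
        using assms(1) less.prems unfolding SPg_def u by blast
      moreover have "(h (u - 1) \<noteq> h u) = (h (2^v - 1) \<noteq> h (2^v))"
        using assms(2) less.prems unfolding SPg_def u by blast
      ultimately show ?thesis using i1 by auto
    qed
  qed
qed

lemma lin_xor: "(lin n d x \<noteq> lin n d y) = par n (\<lambda>i. d i \<and> (odd (x div 2^i) \<noteq> odd (y div 2^i)))"
  unfolding lin_def par_xor by (rule par_cong) auto

lemma lin_flip: "(lin n d (2^v*(2*k+1) - 1) \<noteq> lin n d (2^v*(2*k+1))) = par n (\<lambda>i. d i \<and> i \<le> v)"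
  unfolding lin_xor bitflip by simp

lemma lin_zero: "lin n d 0 = False"
  unfolding lin_def by (simp add: par_false)

lemma lin_pow: "i < n \<Longrightarrow> lin n d (2^i) = d i"
  unfolding lin_def pow_div_odd by (simp add: par_single)

lemma sound_aux:
  assumes "Q \<ge> 1" "Q' \<ge> 1" "distinct [int Q, int Q+1, int Q', int Q'+1]"
    "(lin n d (Q-1) \<noteq> lin n d Q) = (lin n d (Q'-1) \<noteq> lin n d Q')"
  shows "satisfies (\<lambda>j. e \<noteq> lin n d (nat (j-1))) {int Q, int Q+1, int Q', int Q'+1}"
  unfolding sat4[OF assms(3)] using assms(4) nat_m1[OF assms(1)] nat_m1[OF assms(2)] by auto

lemma line_sound: "line_ok n (\<lambda>j. e \<noteq> lin n d (nat (j - 1)))"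
  unfolding line_ok_def
proof
  fix T assume "T \<in> bd_sets n"
  then obtain v k where vk: "v + 2 \<le> n" "2^v*(2*k+3) < (2::nat)^n"
   "T = {int (2^v*(2*k+1)), int (2^v*(2*k+1)) + 1, int (2^v*(2*k+3)), int (2^v*(2*k+3)) + 1}"
    by (rule bd_sets_D)
  have e: "2*Suc k + 1 = 2*k+3" by simp
  have p1: "2^v*(2*k+1) \<ge> (1::nat)" "2^v*(2*k+3) \<ge> (1::nat)" by (simp_all add: Suc_le_eq)
  have fl: "(lin n d (2^v*(2*k+1) - 1) \<noteq> lin n d (2^v*(2*k+1))) =
        (lin n d (2^v*(2*k+3) - 1) \<noteq> lin n d (2^v*(2*k+3)))"
    using lin_flip[of n d v k] lin_flip[of n d v "Suc k"] unfolding e by simp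
  show "satisfies (\<lambda>j. e \<noteq> lin n d (nat (j - 1))) T"
    unfolding vk(3) by (rule sound_aux[OF p1(1) p1(2) distinct4 fl])
qed

lemma SPg_of_line:
  assumes "line_ok n f"
  shows "SPg n (\<lambda>u. f (int u + 1))"
  unfolding SPg_def
proof (intro allI impI)
  fix v k assume a: "2^v*(2*k+1) < (2::nat)^n"
  have p1: "2^v*(2*k+1) \<ge> (1::nat)" "(2::nat)^v \<ge> 1" by (simp_all add: Suc_le_eq)
  have c1: "int (2^v*(2*k+1) - 1) + 1 = int (2^v*(2*k+1))" 
           "int (2^v - 1) + 1 = int (2^v)"
    by (rule int_m1, rule p1(1)) (rule int_m1, rule p1(2))
  show "(f (int (2^v*(2*k+1) - 1) + 1) \<noteq> f (int (2^v*(2*k+1)) + 1)) =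
        (f (int (2^v - 1) + 1) \<noteq> f (int (2^v) + 1))"
    unfolding c1 using SP[OF assms a] by simp
qed

lemma line_complete:
  assumes "line_ok n f"
  shows "\<exists>e d. \<forall>j. 1 \<le> j \<and> j \<le> 2^n \<longrightarrow> f j = (e \<noteq> lin n d (nat (j - 1)))"
proof -
  define g where "g u = f (int u + 1)" for u
  define e where "e = g 0"
  define d where "d i = (g (2^i) \<noteq> g 0)" for i
  define h where "h u = (e \<noteq> lin n d u)" for u
  have sg: "SPg n g" unfolding g_def by (rule SPg_of_line[OF assms])
  have sh: "SPg n h" unfolding SPg_def h_def
  proof (intro allI impI)
    fix v k
    show "((e \<noteq> lin n d (2^v*(2*k+1) - 1)) \<noteq> (e \<noteq> lin n d (2^v*(2*k+1)))) =
          ((e \<noteq> lin n d (2^v - 1)) \<noteq> (e \<noteq> lin n d (2^v)))"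
      using lin_flip[of n d v k] lin_flip[of n d v 0] by auto
  qed
  have h0: "g 0 = h 0" unfolding h_def e_def lin_zero by simp
  have hp: "g (2^i) = h (2^i)" if "i < n" for i
    unfolding h_def lin_pow[OF that] e_def d_def by auto
  have "f j = (e \<noteq> lin n d (nat (j - 1)))" if "1 \<le> j" "j \<le> 2^n" for j
  proof -
    have "nat (j - 1) < 2^n" using that by (simp add: nat_less_iff)
    then have "g (nat (j - 1)) = h (nat (j - 1))" using uniq[OF sg sh h0 hp] by blast
    moreover have "int (nat (j - 1)) + 1 = j" using that by simp
    ultimately show ?thesis unfolding g_def h_def by simp
  qed
  then show ?thesis by blast
qed



lemma bulk_mem:
  assumes "Suc i' < 2^cb m" "Suc j' < 2^ca m"
  shows "{(int i'+1, int j'+1), (int (Suc i')+1, int j'+1), (int i'+1, int (Suc j')+1), (int (Suc i')+1, int (Suc j')+1)} \<in> bulk_checks m"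
proof -
  have a: "int i' + 1 < 2^cb m" "int j' + 1 < 2^ca m"
    using assms by (simp_all add: of_nat_less_iff[symmetric, where 'a=int])
  have "{(int i'+1, int j'+1), (int (Suc i')+1, int j'+1), (int i'+1, int (Suc j')+1), (int (Suc i')+1, int (Suc j')+1)}
     = {(int i'+1, int j'+1), ((int i'+1)+1, int j'+1), (int i'+1, (int j'+1)+1), ((int i'+1)+1, (int j'+1)+1)}"
    by simp
  then show ?thesis unfolding bulk_checks_def using a by fastforce
qed

lemma bulk_rel:
  assumes "\<forall>S\<in>bulk_checks m. satisfies x S" "Suc i' < 2^cb m" "Suc j' < 2^ca m"
  shows "(x (int i'+1, int j'+1) \<noteq> x (int (Suc i')+1, int j'+1)) =
         (x (int i'+1, int (Suc j')+1) \<noteq> x (int (Suc i')+1, int (Suc j')+1))"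
proof -
  have d: "distinct [(int i'+1, int j'+1), (int (Suc i')+1, int j'+1), (int i'+1, int (Suc j')+1), (int (Suc i')+1, int (Suc j')+1)]"
    by simp
  show ?thesis using assms(1) bulk_mem[OF assms(2,3)] sat4[OF d] by blast
qed

lemma grid_decomp:
  assumes "\<forall>S\<in>bulk_checks m. satisfies x S"
  shows "i' < 2^cb m \<Longrightarrow> j' < 2^ca m \<Longrightarrow>
    x (int i'+1, int j'+1) = ((x (int i'+1, 1) \<noteq> x (1, int j'+1)) \<noteq> x (1,1))"
proof (induction i' arbitrary: j')
  case 0 then show ?case by auto
next
  case (Suc i')
  note IHo = Suc.IH
  have ib: "Suc i' < 2^cb m" by fact
  show ?case using \<open>j' < 2^ca m\<close>
  proof (induction j')
    case 0 then show ?case by auto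
  next
    case (Suc j')
    have jb: "Suc j' < 2^ca m" by fact
    have r: "(x (int i'+1, int j'+1) \<noteq> x (int (Suc i')+1, int j'+1)) =
         (x (int i'+1, int (Suc j')+1) \<noteq> x (int (Suc i')+1, int (Suc j')+1))"
      by (rule bulk_rel[OF assms ib jb])
    have h1: "x (int i'+1, int j'+1) = ((x (int i'+1, 1) \<noteq> x (1, int j'+1)) \<noteq> x (1,1))"
      using IHo ib jb by simp
    have h2: "x (int i'+1, int (Suc j')+1) = ((x (int i'+1, 1) \<noteq> x (1, int (Suc j')+1)) \<noteq> x (1,1))"
      using IHo[of "Suc j'"] ib jb by simp
    have h3: "x (int (Suc i')+1, int j'+1) = ((x (int (Suc i')+1, 1) \<noteq> x (1, int j'+1)) \<noteq> x (1,1))"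
      using Suc.IH jb by simp
    show ?case using r h1 h2 h3 by (simp only: ) blast
  qed
qed

lemma bd_range:
  assumes "T \<in> bd_sets n" "j \<in> T"
  shows "1 \<le> j \<and> j \<le> 2^n"
proof -
  obtain v k where vk: "v + 2 \<le> n" "2^v*(2*k+3) < (2::nat)^n"
   "T = {int (2^v*(2*k+1)), int (2^v*(2*k+1)) + 1, int (2^v*(2*k+3)), int (2^v*(2*k+3)) + 1}"
    using assms(1) by (rule bd_sets_D)
  have p1: "2^v*(2*k+1) \<ge> (1::nat)" by (simp add: Suc_le_eq)
  have le: "2^v*(2*k+1) \<le> (2::nat)^v*(2*k+3)" by (rule mult_le_mono2) simp
  have "int (2^v*(2*k+1)) \<ge> 1" "int (2^v*(2*k+3)) + 1 \<le> 2^n" "int (2^v*(2*k+1)) \<le> int (2^v*(2*k+3))"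
    using p1 vk(2) le by (simp_all only: of_nat_le_iff[symmetric, where 'a=int] ) (simp_all add: of_nat_less_iff[symmetric, where 'a=int])
  then show ?thesis using assms(2) vk(3) by auto
qed

lemma lin_cong: "(\<And>k. k < n \<Longrightarrow> d k = d' k) \<Longrightarrow> lin n d u = lin n d' u"
  unfolding lin_def by (rule par_cong) auto



definition pi :: "nat \<Rightarrow> int \<times> int \<Rightarrow> bool list" where
  "pi m p = bits (cb m) (nat (fst p - 1)) @ bits (ca m) (nat (snd p - 1))"

definition rho :: "nat \<Rightarrow> bool list \<Rightarrow> int \<times> int" where
  "rho m v = (int (val (take (cb m) v)) + 1, int (val (drop (cb m) v)) + 1)"

lemma cab: "cb m + ca m = m" unfolding ca_def cb_def by simp

lemma grid_iff: "p \<in> grid m \<longleftrightarrow> 1 \<le> fst p \<and> fst p \<le> 2^cb m \<and> 1 \<le> snd p \<and> snd p \<le> 2^ca m"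
  unfolding grid_def by (cases p) auto

lemma nat_lt_pow: "1 \<le> (i::int) \<Longrightarrow> i \<le> 2^n \<Longrightarrow> nat (i - 1) < 2^n"
proof -
  assume "1 \<le> i" "i \<le> 2^n"
  then have "i - 1 < int (2^n)" by simp
  then show "nat (i - 1) < 2^n" by (simp add: nat_less_iff)
qed

lemma int_lt_pow: "(a::nat) < 2^n \<Longrightarrow> int a + 1 \<le> 2^n"
proof -
  assume "a < 2^n"
  then have "a + 1 \<le> 2^n" by simp
  then have "int (a+1) \<le> int (2^n)" by (simp only: of_nat_le_iff)
  then show ?thesis by (simp only: of_nat_add of_nat_1 of_nat_power of_nat_numeral)
qed

lemma pi_vecs: "pi m p \<in> vecs m"
  unfolding pi_def vecs_def using cab[of m] by simp

lemma rho_grid: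
  assumes "v \<in> vecs m" shows "rho m v \<in> grid m"
proof -
  have l: "length (take (cb m) v) = cb m" "length (drop (cb m) v) = ca m"
    using assms cab[of m] unfolding vecs_def by auto
  have "val (take (cb m) v) < 2^cb m" "val (drop (cb m) v) < 2^ca m"
    using val_less[of "take (cb m) v"] val_less[of "drop (cb m) v"] unfolding l by simp_all
  then have "int (val (take (cb m) v)) + 1 \<le> 2^cb m" "int (val (drop (cb m) v)) + 1 \<le> 2^ca m"
    by (simp_all add: int_lt_pow)
  then show ?thesis unfolding grid_iff rho_def by simp
qed

lemma rho_pi: assumes "p \<in> grid m" shows "rho m (pi m p) = p"
proof -
  obtain i j where p: "p = (i,j)" by (cases p)
  have ij: "1 \<le> i" "i \<le> 2^cb m" "1 \<le> j" "j \<le> 2^ca m" using assms unfolding grid_iff p by auto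
  have "val (bits (cb m) (nat (i-1))) = nat (i - 1)" by (rule val_bits[OF nat_lt_pow[OF ij(1,2)]])
  moreover have "val (bits (ca m) (nat (j-1))) = nat (j - 1)" by (rule val_bits[OF nat_lt_pow[OF ij(3,4)]])
  ultimately show ?thesis unfolding rho_def pi_def p using ij by simp
qed

lemma pi_rho: assumes "v \<in> vecs m" shows "pi m (rho m v) = v"
proof -
  have l: "length (take (cb m) v) = cb m" "length (drop (cb m) v) = ca m"
    using assms cab[of m] unfolding vecs_def by auto
  have "bits (cb m) (val (take (cb m) v)) = take (cb m) v" using bits_val[of "take (cb m) v"] unfolding l .
  moreover have "bits (ca m) (val (drop (cb m) v)) = drop (cb m) v" using bits_val[of "drop (cb m) v"] unfolding l .
  ultimately show ?thesis unfolding rho_def pi_def by simp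
qed

lemma bij_pi: "bij_betw (pi m) (grid m) (vecs m)"
  by (rule bij_betw_byWitness[where f'="rho m"]) (auto simp: rho_pi pi_rho pi_vecs rho_grid)

lemma dot_pi:
  assumes "p \<in> grid m" "length c = m"
  shows "dotF2 c (pi m p) = (lin (cb m) (\<lambda>k. c ! k) (nat (fst p - 1)) \<noteq> lin (ca m) (\<lambda>k. c ! (cb m + k)) (nat (snd p - 1)))"
proof -
  have "dotF2 c (pi m p) = par (cb m + ca m) (\<lambda>i. c ! i \<and> pi m p ! i)"
    unfolding dotF2_par assms(2) cab ..
  also have "\<dots> = (par (cb m) (\<lambda>i. c ! i \<and> pi m p ! i) \<noteq> par (ca m) (\<lambda>i. c ! (cb m + i) \<and> pi m p ! (cb m + i)))"
    by (rule par_add)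
  also have "par (cb m) (\<lambda>i. c ! i \<and> pi m p ! i) = lin (cb m) (\<lambda>k. c ! k) (nat (fst p - 1))"
    unfolding lin_def by (rule par_cong) (simp add: pi_def nth_append nth_bits)
  also have "par (ca m) (\<lambda>i. c ! (cb m + i) \<and> pi m p ! (cb m + i)) = lin (ca m) (\<lambda>k. c ! (cb m + k)) (nat (snd p - 1))"
    unfolding lin_def by (rule par_cong) (simp add: pi_def nth_append nth_bits)
  finally show ?thesis .
qed

lemma card_grid: "card (grid m) = 2 ^ m"
proof -
  have "card (grid m) = nat (2^cb m) * nat (2^ca m)"
    unfolding grid_def card_cartesian_product by simp
  also have "\<dots> = 2^cb m * 2^ca m" by (simp add: nat_power_eq)
  also have "\<dots> = 2^m" by (simp only: power_add[symmetric] cab)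
  finally show ?thesis .
qed



definition Gf :: "nat \<Rightarrow> bool \<Rightarrow> bool list \<Rightarrow> bool list \<Rightarrow> bool" where
  "Gf m c0 c = (\<lambda>v. if v \<in> vecs m then (c0 \<noteq> dotF2 c v) else False)"

definition Fm :: "nat \<Rightarrow> (bool list \<Rightarrow> bool) \<Rightarrow> int \<times> int \<Rightarrow> bool" where
  "Fm m y = (\<lambda>p. if p \<in> grid m then y (pi m p) else False)"

lemma RM1_eq: "RM1 m = (\<lambda>(c0,c). Gf m c0 c) ` (UNIV \<times> {c. length c = m})"
  unfolding RM1_def Gf_def by auto

lemma dot_zero: "length c = m \<Longrightarrow> dotF2 c (replicate m False) = False"
proof -
  assume a: "length c = m"
  have "par m (\<lambda>i. c ! i \<and> replicate m False ! i) = par m (\<lambda>_. False)" by (rule par_cong) simp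
  then show ?thesis unfolding dotF2_par a par_false .
qed

lemma dot_unit: "k < m \<Longrightarrow> length c = m \<Longrightarrow> dotF2 c (map (\<lambda>i. i = k) [0..<m]) = c ! k"
proof -
  assume a: "k < m" "length c = m"
  have "dotF2 c (map (\<lambda>i. i = k) [0..<m]) = par m (\<lambda>i. c ! i \<and> i = k)"
    unfolding dotF2_par a(2) by (rule par_cong) simp
  also have "\<dots> = c ! k" using a(1) by (simp add: par_single)
  finally show ?thesis .
qed

lemma Gf_inj:
  assumes "length c = m" "length c' = m" "Gf m c0 c = Gf m c0' c'"
  shows "c0 = c0' \<and> c = c'"
proof -
  have z: "replicate m False \<in> vecs m" unfolding vecs_def by simp
  have "Gf m c0 c (replicate m False) = Gf m c0' c' (replicate m False)" using assms(3) by simp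
  then have c0: "c0 = c0'" unfolding Gf_def using z dot_zero assms(1,2) by simp
  have "c ! k = c' ! k" if "k < m" for k
  proof -
    have u: "map (\<lambda>i. i = k) [0..<m] \<in> vecs m" unfolding vecs_def by simp
    have "Gf m c0 c (map (\<lambda>i. i = k) [0..<m]) = Gf m c0' c' (map (\<lambda>i. i = k) [0..<m])" using assms(3) by simp
    then have "(c0 \<noteq> dotF2 c (map (\<lambda>i. i = k) [0..<m])) = (c0' \<noteq> dotF2 c' (map (\<lambda>i. i = k) [0..<m]))"
      unfolding Gf_def using u by simp
    then show ?thesis unfolding dot_unit[OF that assms(1)] dot_unit[OF that assms(2)] c0 by blast
  qed
  then have "c = c'" using assms(1,2) by (simp add: nth_equalityI)
  then show ?thesis using c0 by simp
qed

lemma vecs_eq: "vecs m = {xs. set xs \<subseteq> UNIV \<and> length xs = m}"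
  unfolding vecs_def by simp

lemma card_vecs: "card (vecs m) = 2^m"
  using card_lists_length_eq[of "UNIV::bool set" m] unfolding vecs_def by simp

lemma finite_vecs: "finite (vecs m)"
  unfolding vecs_eq by (rule finite_lists_length_eq) simp

lemma card_RM1: "card (RM1 m) = 2^(m+1)"
proof -
  have inj: "inj_on (\<lambda>(c0,c). Gf m c0 c) (UNIV \<times> {c. length c = m})"
    unfolding inj_on_def using Gf_inj by auto
  have "card (RM1 m) = card ((UNIV::bool set) \<times> {c::bool list. length c = m})"
    unfolding RM1_eq using card_image[OF inj] by simp
  also have "\<dots> = 2 * 2^m" using card_vecs[of m] unfolding vecs_def card_cartesian_product by simp
  finally show ?thesis by simp
qed

lemma par_flip:
  assumes "i0 < m" "d i0" "length v = m"
  shows "par m (\<lambda>i. d i \<and> v[i0 := \<not> v ! i0] ! i) = (\<not> par m (\<lambda>i. d i \<and> v ! i))"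
proof -
  have "(par m (\<lambda>i. d i \<and> v[i0 := \<not> v ! i0] ! i) \<noteq> par m (\<lambda>i. d i \<and> v ! i))
      = par m (\<lambda>i. (d i \<and> v[i0 := \<not> v ! i0] ! i) \<noteq> (d i \<and> v ! i))" by (rule par_xor)
  also have "\<dots> = par m (\<lambda>i. d i \<and> i = i0)"
    by (rule par_cong) (use assms in \<open>auto simp: nth_list_update\<close>)
  also have "\<dots> = True" using assms by (simp add: par_single)
  finally show ?thesis by auto
qed

lemma weight:
  assumes "i0 < m" "d i0"
  shows "card {v\<in>vecs m. e \<noteq> par m (\<lambda>i. d i \<and> v ! i)} = 2^(m-1)"
proof -
  define A where "A = {v\<in>vecs m. e \<noteq> par m (\<lambda>i. d i \<and> v ! i)}"
  define B where "B = {v\<in>vecs m. \<not> (e \<noteq> par m (\<lambda>i. d i \<and> v ! i))}"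
  define fl where "fl v = v[i0 := \<not> v ! i0]" for v :: "bool list"
  have flv: "fl v \<in> vecs m" if "v \<in> vecs m" for v using that unfolding fl_def vecs_def by simp
  have flfl: "fl (fl v) = v" if "v \<in> vecs m" for v
    using that assms(1) unfolding fl_def vecs_def by (simp add: list_update_same_conv)
  have flp: "par m (\<lambda>i. d i \<and> fl v ! i) = (\<not> par m (\<lambda>i. d i \<and> v ! i))" if "v \<in> vecs m" for v
    unfolding fl_def using par_flip[of i0 m d, OF assms] that unfolding vecs_def by simp
  have "bij_betw fl A B"
    by (rule bij_betw_byWitness[where f'=fl]) (auto simp: A_def B_def flv flfl flp)
  then have cAB: "card A = card B" by (rule bij_betw_same_card)
  have "A \<union> B = vecs m" "A \<inter> B = {}" unfolding A_def B_def by auto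
  moreover have "finite A" "finite B" unfolding A_def B_def using finite_vecs by auto
  ultimately have "card A + card B = 2^m" using card_Un_disjoint card_vecs by metis
  then have "2 * card A = 2^m" using cAB by simp
  moreover have "(2::nat)^m = 2 * 2^(m-1)" using assms(1) by (cases m) auto
  ultimately show ?thesis unfolding A_def by simp
qed

lemma weight0:
  assumes "\<forall>i<m. \<not> d i"
  shows "card {v\<in>vecs m. e \<noteq> par m (\<lambda>i. d i \<and> v ! i)} = (if e then 2^m else 0)"
proof -
  have "par m (\<lambda>i. d i \<and> v ! i) = False" for v
    using par_cong[of m "\<lambda>i. d i \<and> v ! i" "\<lambda>_. False"] assms by (simp add: par_false)
  then show ?thesis using card_vecs by simp
qed

lemma hdist_G:
  assumes "length a = m" "length b = m"
  shows "hdist (Gf m a0 a) (Gf m b0 b) = card {v\<in>vecs m. (a0 \<noteq> b0) \<noteq> par m (\<lambda>i. (a ! i \<noteq> b ! i) \<and> v ! i)}"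
proof -
  have "(dotF2 a v \<noteq> dotF2 b v) = par m (\<lambda>i. (a ! i \<noteq> b ! i) \<and> v ! i)" for v
    unfolding dotF2_par assms par_xor by (rule par_cong) auto
  then have "{v. Gf m a0 a v \<noteq> Gf m b0 b v} = {v\<in>vecs m. (a0 \<noteq> b0) \<noteq> par m (\<lambda>i. (a ! i \<noteq> b ! i) \<and> v ! i)}"
    unfolding Gf_def by auto
  then show ?thesis unfolding hdist_def by simp
qed

lemma hdist_F:
  assumes "\<And>v. v \<notin> vecs m \<Longrightarrow> \<not> y1 v" "\<And>v. v \<notin> vecs m \<Longrightarrow> \<not> y2 v"
  shows "hdist (Fm m y1) (Fm m y2) = hdist y1 y2"
proof -
  have e1: "{p. Fm m y1 p \<noteq> Fm m y2 p} = {p\<in>grid m. y1 (pi m p) \<noteq> y2 (pi m p)}"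
    unfolding Fm_def by auto
  have "bij_betw (pi m) {p\<in>grid m. y1 (pi m p) \<noteq> y2 (pi m p)} {v. y1 v \<noteq> y2 v}"
  proof (rule bij_betw_subset[OF bij_pi])
    show "{p\<in>grid m. y1 (pi m p) \<noteq> y2 (pi m p)} \<subseteq> grid m" by auto
    show "pi m ` {p\<in>grid m. y1 (pi m p) \<noteq> y2 (pi m p)} = {v. y1 v \<noteq> y2 v}"
    proof
      show "pi m ` {p\<in>grid m. y1 (pi m p) \<noteq> y2 (pi m p)} \<subseteq> {v. y1 v \<noteq> y2 v}" by auto
      show "{v. y1 v \<noteq> y2 v} \<subseteq> pi m ` {p\<in>grid m. y1 (pi m p) \<noteq> y2 (pi m p)}"
      proof
        fix v assume v: "v \<in> {v. y1 v \<noteq> y2 v}"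
        then have vv: "v \<in> vecs m" using assms by auto
        then show "v \<in> pi m ` {p\<in>grid m. y1 (pi m p) \<noteq> y2 (pi m p)}"
          using v rho_grid[OF vv] pi_rho[OF vv] by (metis (mono_tags, lifting) image_eqI mem_Collect_eq)
      qed
    qed
  qed
  then show ?thesis unfolding hdist_def e1 by (rule bij_betw_same_card)
qed

lemma RM1_vanish: "y \<in> RM1 m \<Longrightarrow> v \<notin> vecs m \<Longrightarrow> \<not> y v"
  unfolding RM1_def by auto

lemma Fm_inj: "inj_on (Fm m) (RM1 m)"
proof (rule inj_onI)
  fix y1 y2 assume y: "y1 \<in> RM1 m" "y2 \<in> RM1 m" "Fm m y1 = Fm m y2"
  show "y1 = y2"
  proof
    fix v show "y1 v = y2 v"
    proof (cases "v \<in> vecs m")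
      case True
      have "Fm m y1 (rho m v) = Fm m y2 (rho m v)" using y(3) by simp
      then show ?thesis unfolding Fm_def using rho_grid[OF True] pi_rho[OF True] by simp
    next
      case False then show ?thesis using RM1_vanish y by blast
    qed
  qed
qed



lemma hor_mem: "T \<in> bd_sets (ca m) \<Longrightarrow> (\<lambda>j. (1::int, j)) ` T \<in> all_checks m"
  unfolding all_checks_def hor_checks_def by blast

lemma ver_mem: "T \<in> bd_sets (cb m) \<Longrightarrow> (\<lambda>i. (i, 1::int)) ` T \<in> all_checks m"
  unfolding all_checks_def ver_checks_def by blast

lemma inj_h: "inj (\<lambda>j. (1::int, j::int))" by (auto simp: inj_def)
lemma inj_v: "inj (\<lambda>i. (i::int, 1::int))" by (auto simp: inj_def)

lemma sub1:
  assumes "y \<in> RM1 m"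
  shows "Fm m y \<in> uRM m"
proof -
  obtain c0 c where c: "length c = m" "y = Gf m c0 c"
    using assms unfolding RM1_def Gf_def by auto
  define R where "R i = lin (cb m) (\<lambda>k. c ! k) (nat (i - 1))" for i
  define C where "C j = lin (ca m) (\<lambda>k. c ! (cb m + k)) (nat (j - 1))" for j
  have val: "Fm m y (i, j) = (c0 \<noteq> (R i \<noteq> C j))" if "(i, j) \<in> grid m" for i j
    using that pi_vecs[of m "(i,j)"] dot_pi[OF that c(1)]
    unfolding Fm_def c(2) Gf_def R_def C_def by simp
  have supp: "\<forall>p. Fm m y p \<longrightarrow> p \<in> grid m" unfolding Fm_def by auto
  have chk: "satisfies (Fm m y) S" if S: "S \<in> all_checks m" for S
  proof -
    consider (b) "S \<in> bulk_checks m" | (h) "S \<in> hor_checks m" | (v) "S \<in> ver_checks m"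
      using S unfolding all_checks_def by blast
    then show ?thesis
    proof cases
      case b
      then obtain i j where ij: "S = {(i,j), (i+1,j), (i,j+1), (i+1,j+1)}"
        "1 \<le> i" "i < 2 ^ cb m" "1 \<le> j" "j < 2 ^ ca m"
        unfolding bulk_checks_def by blast
      have g: "(i,j) \<in> grid m" "(i+1,j) \<in> grid m" "(i,j+1) \<in> grid m" "(i+1,j+1) \<in> grid m"
        using ij unfolding grid_iff by auto
      have d: "distinct [(i,j), (i+1,j), (i,j+1), (i+1,j+1)]" by simp
      show ?thesis unfolding ij(1) sat4[OF d] val[OF g(1)] val[OF g(2)] val[OF g(3)] val[OF g(4)]
        by auto
    next
      case h
      then obtain T where T: "T \<in> bd_sets (ca m)" "S = (\<lambda>j. (1, j)) ` T"
        unfolding hor_checks_def by blast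
      have "satisfies (\<lambda>j. Fm m y (1, j)) T = satisfies (\<lambda>j. (c0 \<noteq> R 1) \<noteq> lin (ca m) (\<lambda>k. c ! (cb m + k)) (nat (j - 1))) T"
      proof (rule sat_cong)
        fix j assume "j \<in> T"
        then have "1 \<le> j \<and> j \<le> 2 ^ ca m" using bd_range T(1) by blast
        then have "(1, j) \<in> grid m" unfolding grid_iff by simp
        then show "Fm m y (1, j) = ((c0 \<noteq> R 1) \<noteq> lin (ca m) (\<lambda>k. c ! (cb m + k)) (nat (j - 1)))"
          using val unfolding C_def by auto
      qed
      moreover have "satisfies (\<lambda>j. (c0 \<noteq> R 1) \<noteq> lin (ca m) (\<lambda>k. c ! (cb m + k)) (nat (j - 1))) T"
        using line_sound T(1) unfolding line_ok_def by blast
      ultimately show ?thesis unfolding T(2) sat_image[OF inj_h] by simp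
    next
      case v
      then obtain T where T: "T \<in> bd_sets (cb m)" "S = (\<lambda>i. (i, 1)) ` T"
        unfolding ver_checks_def by blast
      have "satisfies (\<lambda>i. Fm m y (i, 1)) T = satisfies (\<lambda>i. (c0 \<noteq> C 1) \<noteq> lin (cb m) (\<lambda>k. c ! k) (nat (i - 1))) T"
      proof (rule sat_cong)
        fix i assume "i \<in> T"
        then have "1 \<le> i \<and> i \<le> 2 ^ cb m" using bd_range T(1) by blast
        then have "(i, 1) \<in> grid m" unfolding grid_iff by simp
        then show "Fm m y (i, 1) = ((c0 \<noteq> C 1) \<noteq> lin (cb m) (\<lambda>k. c ! k) (nat (i - 1)))"
          using val unfolding R_def by auto
      qed
      moreover have "satisfies (\<lambda>i. (c0 \<noteq> C 1) \<noteq> lin (cb m) (\<lambda>k. c ! k) (nat (i - 1))) T"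
        using line_sound T(1) unfolding line_ok_def by blast
      ultimately show ?thesis unfolding T(2) sat_image[OF inj_v] by simp
    qed
  qed
  show ?thesis unfolding uRM_def using supp chk by blast
qed

lemma sub2:
  assumes "x \<in> uRM m"
  shows "x \<in> Fm m ` RM1 m"
proof -
  have supp: "\<And>p. x p \<Longrightarrow> p \<in> grid m" and chk: "\<And>S. S \<in> all_checks m \<Longrightarrow> satisfies x S"
    using assms unfolding uRM_def by auto
  have bulk: "\<forall>S\<in>bulk_checks m. satisfies x S" using chk unfolding all_checks_def by blast
  have lh: "line_ok (ca m) (\<lambda>j. x (1, j))"
    unfolding line_ok_def using chk[OF hor_mem] sat_image[OF inj_h] by metis
  have lv: "line_ok (cb m) (\<lambda>i. x (i, 1))"
    unfolding line_ok_def using chk[OF ver_mem] sat_image[OF inj_v] by metis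
  obtain e1 d1 where h1: "\<And>j. 1 \<le> j \<Longrightarrow> j \<le> 2 ^ ca m \<Longrightarrow> x (1, j) = (e1 \<noteq> lin (ca m) d1 (nat (j - 1)))"
    using line_complete[OF lh] by blast
  obtain e2 d2 where h2: "\<And>i. 1 \<le> i \<Longrightarrow> i \<le> 2 ^ cb m \<Longrightarrow> x (i, 1) = (e2 \<noteq> lin (cb m) d2 (nat (i - 1)))"
    using line_complete[OF lv] by blast
  define c where "c = map (\<lambda>k. if k < cb m then d2 k else d1 (k - cb m)) [0..<m]"
  define c0 where "c0 = ((e1 \<noteq> e2) \<noteq> x (1,1))"
  have lc: "length c = m" unfolding c_def by simp
  have yR: "Gf m c0 c \<in> RM1 m" unfolding RM1_def Gf_def using lc by blast
  have cab': "cb m + ca m = m" by (rule cab)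
  have L1: "lin (cb m) (\<lambda>k. c ! k) u = lin (cb m) d2 u" for u
    by (rule lin_cong) (use cab' in \<open>simp add: c_def\<close>)
  have L2: "lin (ca m) (\<lambda>k. c ! (cb m + k)) u = lin (ca m) d1 u" for u
    by (rule lin_cong) (use cab' in \<open>simp add: c_def\<close>)
  have "x = Fm m (Gf m c0 c)"
  proof
    fix p
    show "x p = Fm m (Gf m c0 c) p"
    proof (cases "p \<in> grid m")
      case False then show ?thesis using supp[of p] unfolding Fm_def by auto
    next
      case True
      obtain i j where p: "p = (i, j)" by (cases p)
      have ij: "1 \<le> i" "i \<le> 2^cb m" "1 \<le> j" "j \<le> 2^ca m" using True unfolding grid_iff p by auto
      have ii: "int (nat (i - 1)) + 1 = i" "int (nat (j - 1)) + 1 = j" using ij by auto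
      have gd: "x (i, j) = ((x (i, 1) \<noteq> x (1, j)) \<noteq> x (1,1))"
        using grid_decomp[OF bulk nat_lt_pow[OF ij(1,2)] nat_lt_pow[OF ij(3,4)]] unfolding ii .
      have "Fm m (Gf m c0 c) p = (c0 \<noteq> (lin (cb m) d2 (nat (i - 1)) \<noteq> lin (ca m) d1 (nat (j - 1))))"
        using True pi_vecs[of m p] dot_pi[OF True lc] unfolding Fm_def Gf_def L1 L2 p by simp
      moreover have "x (1,1) = e2" using h2[of 1] by (simp add: lin_zero)
      ultimately show ?thesis unfolding p gd h1[OF ij(3,4)] h2[OF ij(1,2)] c0_def by auto
    qed
  qed
  then show ?thesis using yR by blast
qed

lemma uRM_eq: "uRM m = Fm m ` RM1 m"
  using sub1 sub2 by blast

lemma Gf_RM1: "length c = m \<Longrightarrow> Gf m c0 c \<in> RM1 m"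
  unfolding RM1_def Gf_def by blast

lemma RM1_Gf: "y \<in> RM1 m \<Longrightarrow> \<exists>c0 c. length c = m \<and> y = Gf m c0 c"
  unfolding RM1_def Gf_def by blast

lemma hdist_self: "hdist x x = 0" unfolding hdist_def by simp

lemma dist_lower:
  assumes "m \<ge> 1" "y1 \<in> RM1 m" "y2 \<in> RM1 m" "y1 \<noteq> y2"
  shows "2^(m-1) \<le> hdist y1 y2"
proof -
  obtain a0 a where a: "length a = m" "y1 = Gf m a0 a" using RM1_Gf[OF assms(2)] by blast
  obtain b0 b where b: "length b = m" "y2 = Gf m b0 b" using RM1_Gf[OF assms(3)] by blast
  have hd: "hdist y1 y2 = card {v\<in>vecs m. (a0 \<noteq> b0) \<noteq> par m (\<lambda>i. (a ! i \<noteq> b ! i) \<and> v ! i)}"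
    unfolding a(2) b(2) by (rule hdist_G[OF a(1) b(1)])
  show ?thesis
  proof (cases "\<exists>i<m. a ! i \<noteq> b ! i")
    case True
    then obtain i0 where "i0 < m" "a ! i0 \<noteq> b ! i0" by blast
    then have "hdist y1 y2 = 2^(m-1)" unfolding hd
      by (rule weight[where d="\<lambda>i. a ! i \<noteq> b ! i"])
    then show ?thesis by simp
  next
    case False
    then have "a = b" using a(1) b(1) by (simp add: nth_equalityI)
    then have "a0 \<noteq> b0" using assms(4) a(2) b(2) by auto
    then have e: "(a0 \<noteq> b0) = True" by simp
    have al: "\<forall>i<m. \<not> (a ! i \<noteq> b ! i)" using False by blast
    have "hdist y1 y2 = 2^m" unfolding hd e using weight0[OF al, of True] by simp
    moreover have "(2::nat)^(m-1) \<le> 2^m" by simp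
    ultimately show ?thesis by simp
  qed
qed

theorem theorem1:
  fixes m :: nat
  assumes "m \<ge> 2"
  shows "(\<exists>\<pi>. bij_betw \<pi> (grid m) (vecs m) \<and>
            uRM m = (\<lambda>y p. if p \<in> grid m then y (\<pi> p) else False) ` RM1 m)
         \<and> card (grid m) = 2 ^ m
         \<and> card (uRM m) = 2 ^ (m + 1)
         \<and> min_dist (uRM m) = 2 ^ (m - 1)"
proof -
  have Fm_eq: "(\<lambda>y p. if p \<in> grid m then y (pi m p) else False) = Fm m"
    unfolding Fm_def ..
  have part1: "\<exists>\<pi>. bij_betw \<pi> (grid m) (vecs m) \<and>
            uRM m = (\<lambda>y p. if p \<in> grid m then y (\<pi> p) else False) ` RM1 m"
  proof (rule exI[of _ "pi m"])
    show "bij_betw (pi m) (grid m) (vecs m) \<and>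
            uRM m = (\<lambda>y p. if p \<in> grid m then y (pi m p) else False) ` RM1 m"
      unfolding Fm_eq using bij_pi[of m] uRM_eq[of m] by blast
  qed
  have cU: "card (uRM m) = 2 ^ (m + 1)"
    unfolding uRM_eq card_image[OF Fm_inj] card_RM1 ..
  have finU: "finite (uRM m)" by (rule card_ge_0_finite) (simp add: cU)
  define D where "D = {hdist x y | x y. x \<in> uRM m \<and> y \<in> uRM m \<and> x \<noteq> y}"
  have finD: "finite D"
  proof -
    have "D \<subseteq> (\<lambda>(x,y). hdist x y) ` (uRM m \<times> uRM m)" unfolding D_def by auto
    moreover have "finite ((\<lambda>(x,y). hdist x y) ` (uRM m \<times> uRM m))" using finU by simp
    ultimately show ?thesis by (rule finite_subset)
  qed
  have m1: "m \<ge> 1" using assms by simp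
  have low: "\<forall>d\<in>D. 2^(m-1) \<le> d"
  proof
    fix d assume "d \<in> D"
    then obtain x y where xy: "d = hdist x y" "x \<in> uRM m" "y \<in> uRM m" "x \<noteq> y" unfolding D_def by blast
    obtain y1 where y1: "y1 \<in> RM1 m" "x = Fm m y1" using xy(2) unfolding uRM_eq by blast
    obtain y2 where y2: "y2 \<in> RM1 m" "y = Fm m y2" using xy(3) unfolding uRM_eq by blast
    have "y1 \<noteq> y2" using xy(4) y1 y2 by blast
    have "d = hdist y1 y2" unfolding xy(1) y1(2) y2(2)
      by (rule hdist_F) (use RM1_vanish y1(1) y2(1) in blast)+
    then show "2^(m-1) \<le> d" using dist_lower[OF m1 y1(1) y2(1) \<open>y1 \<noteq> y2\<close>] by simp
  qed
  have att: "2^(m-1) \<in> D"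
  proof -
    define z where "z = replicate m False"
    define u where "u = map (\<lambda>i. i = 0) [0..<m]"
    have lz: "length z = m" and lu: "length u = m" unfolding z_def u_def by simp_all
    have "hdist (Gf m False z) (Gf m False u) = card {v\<in>vecs m. (False \<noteq> False) \<noteq> par m (\<lambda>i. (z ! i \<noteq> u ! i) \<and> v ! i)}"
      by (rule hdist_G[OF lz lu])
    also have "\<dots> = 2^(m-1)"
      by (rule weight[of 0 m]) (use m1 in \<open>simp_all add: z_def u_def\<close>)
    finally have h: "hdist (Gf m False z) (Gf m False u) = 2^(m-1)" .
    have "hdist (Fm m (Gf m False z)) (Fm m (Gf m False u)) = hdist (Gf m False z) (Gf m False u)"
      by (rule hdist_F) (use RM1_vanish Gf_RM1[OF lz] Gf_RM1[OF lu] in blast)+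
    then have h2: "hdist (Fm m (Gf m False z)) (Fm m (Gf m False u)) = 2^(m-1)" using h by simp
    have mem: "Fm m (Gf m False z) \<in> uRM m" "Fm m (Gf m False u) \<in> uRM m"
      unfolding uRM_eq using Gf_RM1[OF lz] Gf_RM1[OF lu] by auto
    have "Fm m (Gf m False z) \<noteq> Fm m (Gf m False u)"
    proof
      assume "Fm m (Gf m False z) = Fm m (Gf m False u)"
      then have "hdist (Fm m (Gf m False z)) (Fm m (Gf m False u)) = 0" by (simp add: hdist_self)
      then show False using h2 by simp
    qed
    then show ?thesis unfolding D_def using mem h2 by force
  qed
  have md: "min_dist (uRM m) = 2^(m-1)"
    unfolding min_dist_def D_def[symmetric] by (rule Min_eqI[OF finD]) (use low att in auto)
  show ?thesis using part1 card_grid cU md by blast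
qed


end
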